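(* Let $0<q<1$. For complex numbers $\alpha,a,b,c$ with $\mathrm{Re}(c-a-b)>0$, and such that every $q^2$-gamma value occurring below is evaluated at a point that is not a non-positive integer, we have \[ \sum_{n=0}^{\infty}\frac{(\alpha|q^{2})_{a+n}\,(1-\alpha|q^{2})_{b+n}}{[n]_{q^{2}}!\,\Gamma_{q^{2}}(c+n+1)}\,q^{2(c-a-b)n} =\frac{(\alpha|q^{2})_{a}\,(1-\alpha|q^{2})_{b}\,\Gamma_{q^{2}}(c-a-b)}{(1-\alpha|q^{2})_{c-a}\,(\alpha|q^{2})_{c-b}}\;q^{-\alpha(\alpha-1)}\,\frac{\sin_{q}(\pi\alpha)}{\pi_{q}}. \]
   Context: Let $0<q<1$ and write $q^{x}=e^{x\log q}$ for complex $x$. Set $(z;q)_\infty=\prod_{k\ge0}(1-zq^k)$ and $(z_1,\dots,z_m;q)_\infty=\prod_j (z_j;q)_\infty$. The $q$-gamma function is $\Gamma_{q}(x)=\frac{(q;q)_\infty}{(q^{x};q)_\infty}(1-q)^{1-x}$; we use it with base $q^2$: $\Gamma_{q^2}(x)=\frac{(q^2;q^2)_\infty}{(q^{2x};q^2)_\infty}(1-q^2)^{1-x}$. For complex $x,\alpha$, the general $q$-shifted factorial is $(x|q^2)_\alpha=\Gamma_{q^2}(x+\alpha)/\Gamma_{q^2}(x)$. The $q$-integer is $[z]_{q^2}=\frac{1-q^{2z}}{1-q^2}$, and $[0]_{q^2}!=1$, $[n]_{q^2}!=\prod_{k=1}^n[k]_{q^2}$. Gosper's $q$-analogues: $\sin_q(\pi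 x)=q^{(x-1/2)^2}\frac{(q^{2-2x};q^2)_\infty(q^{2x};q^2)_\infty}{(q;q^2)_\infty^2}$ and $\pi_q=(1-q^2)q^{1/4}\frac{(q^2;q^2)_\infty^2}{(q;q^2)_\infty^2}$. *)

theory Defs
  imports "HOL-Analysis.Analysis"
begin

definition qpow :: "real \<Rightarrow> complex \<Rightarrow> complex" where
  "qpow p x = exp (x * complex_of_real (ln p))"

definition qpoch_inf :: "complex \<Rightarrow> real \<Rightarrow> complex" where
  "qpoch_inf z p = (\<Prod>k. 1 - z * complex_of_real (p ^ k))"

definition qgamma :: "real \<Rightarrow> complex \<Rightarrow> complex" where
  "qgamma p x = qpoch_inf (complex_of_real p) p / qpoch_inf (qpow p x) p * qpow (1 - p) (1 - x)"

definition qgamma_poles :: "real \<Rightarrow> complex set" where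
  "qgamma_poles p = {x. qpoch_inf (qpow p x) p = 0}"

definition qshift :: "real \<Rightarrow> complex \<Rightarrow> complex \<Rightarrow> complex" where
  "qshift p x a = qgamma p (x + a) / qgamma p x"

definition qint :: "real \<Rightarrow> nat \<Rightarrow> real" where
  "qint p n = (1 - p ^ n) / (1 - p)"

definition qfact :: "real \<Rightarrow> nat \<Rightarrow> real" where
  "qfact p n = (\<Prod>k = 1..n. qint p k)"

text \<open>Gosper's q-sine sin_q(\<pi> x) and q-pi.\<close>
definition qsin :: "real \<Rightarrow> complex \<Rightarrow> complex" where
  "qsin q x = qpow q ((x - 1/2)^2) * qpoch_inf (qpow q (2 - 2*x)) (q^2)
      * qpoch_inf (qpow q (2*x)) (q^2) / (qpoch_inf (complex_of_real q) (q^2))^2"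

definition qpi :: "real \<Rightarrow> complex" where
  "qpi q = complex_of_real (1 - q^2) * complex_of_real (q powr (1/4))
      * (qpoch_inf (complex_of_real (q^2)) (q^2))^2 / (qpoch_inf (complex_of_real q) (q^2))^2"

end

theory Submission
  imports Defs
begin


definition qp :: "complex \<Rightarrow> real \<Rightarrow> nat \<Rightarrow> complex" where
  "qp X p n = (\<Prod>k<n. 1 - X * complex_of_real (p ^ k))"

lemma qp_Suc: "qp X p (Suc n) = qp X p n * (1 - X * complex_of_real (p ^ n))"
  by (simp add: qp_def)

lemma qp_conv:
  assumes "0 < p" "p < 1"
  shows "convergent_prod (\<lambda>k. 1 - X * complex_of_real (p ^ k))"
proof -
  have "summable (\<lambda>k. norm X * p ^ k)"
    using assms by (intro summable_mult summable_geometric) auto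
  hence "summable (\<lambda>k. norm ((1 - X * complex_of_real (p ^ k)) - 1))"
    using assms by (simp add: norm_mult norm_power)
  thus ?thesis
    by (intro abs_convergent_prod_imp_convergent_prod summable_imp_abs_convergent_prod)
qed

lemma qp_lim:
  assumes "0 < p" "p < 1"
  shows "(\<lambda>n. qp X p n) \<longlonglongrightarrow> qpoch_inf X p"
proof -
  have "(\<lambda>n. \<Prod>k\<le>n. 1 - X * complex_of_real (p ^ k)) \<longlonglongrightarrow> qpoch_inf X p"
    unfolding qpoch_inf_def by (rule convergent_prod_LIMSEQ[OF qp_conv[OF assms]])
  hence "(\<lambda>n. qp X p (Suc n)) \<longlonglongrightarrow> qpoch_inf X p"
    by (simp add: qp_def lessThan_Suc_atMost)
  thus ?thesis by (rule LIMSEQ_imp_Suc)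
qed

lemma qpoch_nz_factor:
  assumes "0 < p" "p < 1" "qpoch_inf X p \<noteq> 0"
  shows "1 - X * complex_of_real (p ^ k) \<noteq> 0"
proof
  assume h: "1 - X * complex_of_real (p ^ k) = 0"
  have "(\<lambda>k. 1 - X * complex_of_real (p ^ k)) has_prod qpoch_inf X p"
    unfolding qpoch_inf_def using qp_conv[OF assms(1,2)] convergent_prod_has_prod by blast
  hence "qpoch_inf X p = 0" using has_prod_eq_0_iff h by (metis rangeI)
  thus False using assms by simp
qed

lemma qp_nz:
  assumes "0 < p" "p < 1" "qpoch_inf X p \<noteq> 0"
  shows "qp X p n \<noteq> 0"
  using qpoch_nz_factor[OF assms] by (simp add: qp_def)

lemma qpoch_split:
  assumes "0 < p" "p < 1" "qpoch_inf X p \<noteq> 0"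
  shows "qpoch_inf X p = qp X p n * qpoch_inf (X * complex_of_real (p ^ n)) p"
proof -
  have "qpoch_inf X p = (\<Prod>i. 1 - X * complex_of_real (p ^ (i + n))) * qp X p n"
    unfolding qpoch_inf_def qp_def
    by (rule prodinf_split_initial_segment[OF qp_conv[OF assms(1,2)]])
       (use qpoch_nz_factor[OF assms] in auto)
  also have "(\<Prod>i. 1 - X * complex_of_real (p ^ (i + n))) = qpoch_inf (X * complex_of_real (p ^ n)) p"
    unfolding qpoch_inf_def by (simp add: power_add mult_ac)
  finally show ?thesis by simp
qed

lemma qpoch_shift_nz:
  assumes "0 < p" "p < 1" "qpoch_inf X p \<noteq> 0"
  shows "qpoch_inf (X * complex_of_real (p ^ n)) p \<noteq> 0"
  using qpoch_split[OF assms, of n] assms(3) by auto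



lemma geo_le: fixes p :: real assumes "0 < p" "p < 1" shows "(\<Sum>k<n. p ^ k) \<le> 1 / (1 - p)"
proof -
  have "(\<Sum>k<n. p ^ k) = (1 - p ^ n) / (1 - p)" using sum_gp_strict[of p n] assms by simp
  also have "\<dots> \<le> 1 / (1 - p)" using assms by (intro divide_right_mono) auto
  finally show ?thesis .
qed

lemma qp_upper:
  assumes "0 < p" "p < 1"
  shows "norm (qp X p n) \<le> exp (norm X / (1 - p))"
proof -
  have "norm (qp X p n) = (\<Prod>k<n. norm (1 - X * complex_of_real (p ^ k)))"
    by (simp add: qp_def prod_norm)
  also have "\<dots> \<le> (\<Prod>k<n. exp (norm X * p ^ k))"
  proof (rule prod_mono, safe)
    fix k
    have "norm (1 - X * complex_of_real (p ^ k)) \<le> 1 + norm X * p ^ k"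
      using norm_triangle_ineq4[of 1 "X * complex_of_real (p ^ k)"] assms
      by (simp add: norm_mult norm_power)
    also have "\<dots> \<le> exp (norm X * p ^ k)" by (rule exp_ge_add_one_self)
    finally show "norm (1 - X * complex_of_real (p ^ k)) \<le> exp (norm X * p ^ k)" .
  qed simp
  also have "\<dots> = exp (norm X * (\<Sum>k<n. p ^ k))" by (simp add: exp_sum sum_distrib_left)
  also have "\<dots> \<le> exp (norm X * (1 / (1 - p)))"
    using geo_le[OF assms, of n] by (intro exp_mono mult_left_mono) auto
  finally show ?thesis by simp
qed

lemma one_minus_ge_exp: fixes x :: real assumes "0 \<le> x" "x \<le> 1/2" shows "exp (-2 * x) \<le> 1 - x"
proof -
  have "1 + 2 * x \<le> exp (2 * x)" by (rule exp_ge_add_one_self)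
  hence "exp (-2 * x) \<le> 1 / (1 + 2 * x)" using assms
    by (simp add: exp_minus field_simps)
  also have "\<dots> \<le> 1 - x"
  proof -
    have h: "x * (x * 2) \<le> x" using mult_left_mono[of "x*2" 1 x] assms by simp
    show ?thesis using h assms by (simp add: field_simps)
  qed
  finally show ?thesis .
qed

lemma qp_lower:
  assumes "0 < p" "p < 1" "norm w \<le> 1/2"
  shows "exp (-1 / (1 - p)) \<le> norm (qp w p n)"
proof -
  have "exp (-1 / (1 - p)) \<le> exp (-2 * norm w * (\<Sum>k<n. p ^ k))"
  proof (intro exp_mono)
    have "2 * norm w * (\<Sum>k<n. p ^ k) \<le> 1 * (1 / (1 - p))"
      using geo_le[OF assms(1,2), of n] assms(3) assms(1)
      by (intro mult_mono) (auto intro!: sum_nonneg)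
    thus "-1 / (1 - p) \<le> -2 * norm w * (\<Sum>k<n. p ^ k)" by simp
  qed
  also have "\<dots> = (\<Prod>k<n. exp (-2 * (norm w * p ^ k)))"
    by (simp add: exp_sum[symmetric] sum_distrib_left mult_ac sum_negf)
  also have "\<dots> \<le> (\<Prod>k<n. norm (1 - w * complex_of_real (p ^ k)))"
  proof (rule prod_mono, safe)
    fix k
    have pk: "p ^ k \<le> 1" "0 \<le> p ^ k" using assms by (auto simp: power_le_one)
    have x: "norm w * p ^ k \<le> 1/2"
      using mult_mono[OF assms(3) pk(1)] pk by simp
    have "exp (-2 * (norm w * p ^ k)) \<le> 1 - norm w * p ^ k"
      by (rule one_minus_ge_exp) (use x pk in auto)
    also have "\<dots> \<le> norm (1 - w * complex_of_real (p ^ k))"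
      using norm_triangle_ineq2[of 1 "w * complex_of_real (p ^ k)"] pk assms(1)
      by (simp add: norm_mult norm_power abs_of_nonneg)
    finally show "exp (-2 * (norm w * p ^ k)) \<le> norm (1 - w * complex_of_real (p ^ k))" .
  qed simp
  also have "\<dots> = norm (qp w p n)" by (simp add: qp_def prod_norm)
  finally show ?thesis .
qed

definition Lq :: "real \<Rightarrow> real" where "Lq p = (\<Prod>k. 1 - p ^ Suc k)"

lemma Lq_props:
  assumes "0 < p" "p < 1"
  shows "Lq p > 0" "\<And>n. Lq p \<le> norm (qp (complex_of_real p) p n)"
proof -
  have f01: "0 < 1 - p ^ Suc k" "1 - p ^ Suc k \<le> 1" for k
    using assms power_Suc_less_one[of p k] by (auto simp del: power_Suc)
  have "summable (\<lambda>k. p * p ^ k)"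
    using assms by (intro summable_mult summable_geometric) auto
  hence "summable (\<lambda>k. norm ((1 - p ^ Suc k) - 1))" using assms by simp
  hence cv: "convergent_prod (\<lambda>k. 1 - p ^ Suc k :: real)"
    by (intro abs_convergent_prod_imp_convergent_prod summable_imp_abs_convergent_prod)
  have "Lq p \<ge> 0" unfolding Lq_def
  proof (rule LIMSEQ_le_const[OF convergent_prod_LIMSEQ[OF cv]])
    show "\<exists>N. \<forall>n\<ge>N. 0 \<le> (\<Prod>k\<le>n. 1 - p ^ Suc k)"
      using f01 by (intro exI[of _ 0] allI impI prod_nonneg) (auto intro: less_imp_le)
  qed
  moreover have "Lq p \<noteq> 0" unfolding Lq_def
    using f01 by (intro prodinf_nonzero[OF cv]) (auto simp: less_le)
  ultimately show "Lq p > 0" by simp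
  fix n
  have "Lq p \<le> (\<Prod>k<n. 1 - p ^ Suc k)" unfolding Lq_def
    by (rule prod_ge_prodinf) (use cv f01 in \<open>auto intro: less_imp_le\<close>)
  also have "(\<Prod>k<n. 1 - p ^ Suc k) = norm (qp (complex_of_real p) p n)"
  proof -
    have "qp (complex_of_real p) p n = complex_of_real (\<Prod>k<n. 1 - p ^ Suc k)"
      by (simp add: qp_def)
    moreover have "(\<Prod>k<n. 1 - p ^ Suc k) \<ge> 0" using f01 by (intro prod_nonneg) (auto intro: less_imp_le)
    ultimately show ?thesis by (metis norm_of_real abs_of_nonneg)
  qed
  finally show "Lq p \<le> norm (qp (complex_of_real p) p n)" .
qed



definition tt :: "complex \<Rightarrow> complex \<Rightarrow> complex \<Rightarrow> real \<Rightarrow> nat \<Rightarrow> complex" where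
  "tt A B C p n = qp A p n * qp B p n / (qp (complex_of_real p) p n * qp C p n) * (C / (A * B)) ^ n"

lemma qp_Suc': "qp X p (Suc n) = (1 - X) * qp (X * complex_of_real p) p n"
  unfolding qp_def by (subst prod.lessThan_Suc_shift) (simp add: mult_ac)

lemma qp_0 [simp]: "qp X p 0 = 1" by (simp add: qp_def)

lemma tt_Suc:
  "tt A B C p (Suc n) = tt A B C p n *
     ((1 - A * complex_of_real p ^ n) * (1 - B * complex_of_real p ^ n) /
      ((1 - complex_of_real p ^ Suc n) * (1 - C * complex_of_real p ^ n)) * (C / (A * B)))"
  by (simp add: tt_def qp_Suc divide_inverse inverse_mult_distrib mult_ac)

lemma tt_shift:
  assumes "\<And>k. 1 - C * complex_of_real p ^ k \<noteq> 0"
  shows "tt A B (C * complex_of_real p) p n =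
     tt A B C p n * (complex_of_real p ^ n * (1 - C) / (1 - C * complex_of_real p ^ n))"
proof -
  have h: "qp (C * complex_of_real p) p n = qp C p n * (1 - C * complex_of_real p ^ n) / (1 - C)"
    using qp_Suc[of C p n] qp_Suc'[of C p n] assms[of 0] by (simp add: field_simps)
  show ?thesis
    unfolding tt_def h using assms[of 0] assms[of n]
    by (simp add: divide_inverse inverse_mult_distrib power_mult_distrib mult_ac)
qed

lemma tt_0 [simp]: "tt A B C p 0 = 1" by (simp add: tt_def)

lemma tt_summable:
  assumes p: "0 < p" "p < 1" and z: "norm (C / (A * B)) < 1"
  shows "summable (tt A B C p)"
proof -
  define z where "z = C / (A * B)"
  define r where "r = (\<lambda>u. (1 - A * u) * (1 - B * u) /
      ((1 - complex_of_real p * u) * (1 - C * u)) * z)"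
  define c where "c = (1 + norm z) / 2"
  have c1: "c < 1" "norm z < c" using z by (auto simp: c_def z_def)
  have "(\<lambda>n. complex_of_real p ^ n) \<longlonglongrightarrow> 0"
    using p by (intro LIMSEQ_power_zero) auto
  hence "(\<lambda>n. r (complex_of_real p ^ n)) \<longlonglongrightarrow> r 0"
    unfolding r_def using p by (intro tendsto_intros) auto
  hence "(\<lambda>n. norm (r (complex_of_real p ^ n))) \<longlonglongrightarrow> norm z"
    by (intro tendsto_eq_intros) (auto simp: r_def)
  hence "eventually (\<lambda>n. norm (r (complex_of_real p ^ n)) < c) sequentially"
    using c1 by (intro order_tendstoD)
  then obtain N where N: "\<And>n. n \<ge> N \<Longrightarrow> norm (r (complex_of_real p ^ n)) < c"
    by (auto simp: eventually_sequentially)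
  show ?thesis
  proof (rule summable_ratio_test[OF c1(1)])
    fix n assume "n \<ge> N"
    have "norm (tt A B C p (Suc n)) = norm (tt A B C p n) * norm (r (complex_of_real p ^ n))"
      by (simp only: tt_Suc r_def z_def norm_mult power_Suc)
    also have "\<dots> \<le> norm (tt A B C p n) * c"
      using N[OF \<open>n \<ge> N\<close>] by (intro mult_left_mono) auto
    finally show "norm (tt A B C p (Suc n)) \<le> c * norm (tt A B C p n)" by (simp add: mult_ac)
  qed
qed



lemma aux_cancel:
  fixes X T N W Z :: complex
  assumes "X \<noteq> 0"
  shows "X * (T * (N / (X * W) * Z)) = T * (N / W * Z)"
proof -
  have "X * (T * (N / (X * W) * Z)) = (X * inverse X) * (T * (N * inverse W * Z))"
    by (simp add: divide_inverse inverse_mult_distrib mult_ac)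
  also have "\<dots> = T * (N / W * Z)" using assms by (simp add: divide_inverse)
  finally show ?thesis .
qed

lemma tele_identity:
  fixes A B C T u pc :: complex
  assumes A: "A \<noteq> 0" "B \<noteq> 0"
    and d1: "1 - pc * u \<noteq> 0" and d2: "1 - C * u \<noteq> 0"
  shows "(1 - C) * (1 - C / (A * B)) * T - (1 - C / A) * (1 - C / B) * (T * (u * (1 - C) / (1 - C * u)))
       = (1 - C) * (1 - u) * T - (1 - C) * (1 - pc * u) *
         (T * ((1 - A * u) * (1 - B * u) / ((1 - pc * u) * (1 - C * u)) * (C / (A * B))))"
proof -
  have e: "(1 - pc * u) * (T * ((1 - A * u) * (1 - B * u) / ((1 - pc * u) * (1 - C * u)) * (C / (A * B))))
      = T * (1 - A * u) * (1 - B * u) * C / ((1 - C * u) * (A * B))"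
    by (subst aux_cancel[OF d1]) (simp add: field_simps)
  have "(1 - C) * (1 - C / (A * B)) * T - (1 - C / A) * (1 - C / B) * (T * (u * (1 - C) / (1 - C * u)))
     = (1 - C) * T * (((A*B - C) * (1 - C * u) - (A - C) * (B - C) * u) / ((A*B) * (1 - C * u)))"
    using A d2 by (simp add: field_simps)
  also have "\<dots> = (1 - C) * T * (((1 - u) * (1 - C * u) * (A * B) - (1 - A * u) * (1 - B * u) * C) / ((A*B) * (1 - C * u)))"
    by (simp add: algebra_simps)
  also have "\<dots> = (1 - C) * (1 - u) * T - (1 - C) * (T * (1 - A * u) * (1 - B * u) * C / ((1 - C * u) * (A * B)))"
    using A d2 by (simp add: field_simps)
  finally show ?thesis by (simp only: e mult.assoc)
qed

lemma contig:
  assumes p: "0 < p" "p < 1" and AB: "A \<noteq> 0" "B \<noteq> 0"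
    and z: "norm (C / (A * B)) < 1"
    and nz: "\<And>k. 1 - C * complex_of_real p ^ k \<noteq> 0"
  shows "(1 - C) * (1 - C / (A * B)) * suminf (tt A B C p) =
         (1 - C / A) * (1 - C / B) * suminf (tt A B (C * complex_of_real p) p)"
proof -
  define g where "g = (\<lambda>n. (1 - C) * (1 - complex_of_real p ^ n) * tt A B C p n)"
  have s1: "summable (tt A B C p)" by (rule tt_summable[OF p z])
  have z2: "norm (C * complex_of_real p / (A * B)) < 1"
  proof -
    have "norm (C * complex_of_real p / (A * B)) = norm (C / (A * B)) * p" using p by (simp add: norm_mult norm_divide)
    also have "\<dots> < 1 * 1" using z p by (intro mult_strict_mono) auto
    finally show ?thesis by simp
  qed
  have s2: "summable (tt A B (C * complex_of_real p) p)" by (rule tt_summable[OF p z2])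
  have "g \<longlonglongrightarrow> (1 - C) * (1 - 0) * 0"
    unfolding g_def using p summable_LIMSEQ_zero[OF s1]
    by (intro tendsto_intros) auto
  hence "(\<lambda>n. g n - g (Suc n)) sums (g 0 - 0)"
    by (intro telescope_sums') simp
  hence tel: "(\<lambda>n. g n - g (Suc n)) sums 0" by (simp add: g_def)
  have eq: "g n - g (Suc n) = (1 - C) * (1 - C / (A * B)) * tt A B C p n -
              (1 - C / A) * (1 - C / B) * tt A B (C * complex_of_real p) p n" for n
  proof -
    have "norm (complex_of_real p ^ Suc n) < 1"
      using p power_Suc_less_one[of p n] by (simp add: norm_power del: power_Suc)
    hence d1: "1 - complex_of_real p * complex_of_real p ^ n \<noteq> 0"
      by (metis norm_one right_minus_eq less_irrefl power_Suc)
    show ?thesis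
      unfolding g_def tt_Suc tt_shift[OF nz] power_Suc
      by (rule tele_identity[OF AB d1 nz[of n], symmetric])
  qed
  have "(\<lambda>n. (1 - C) * (1 - C / (A * B)) * tt A B C p n -
              (1 - C / A) * (1 - C / B) * tt A B (C * complex_of_real p) p n) sums
        ((1 - C) * (1 - C / (A * B)) * suminf (tt A B C p) -
         (1 - C / A) * (1 - C / B) * suminf (tt A B (C * complex_of_real p) p))"
    by (intro sums_diff sums_mult summable_sums s1 s2)
  moreover have "(\<lambda>n. (1 - C) * (1 - C / (A * B)) * tt A B C p n -
              (1 - C / A) * (1 - C / B) * tt A B (C * complex_of_real p) p n) sums 0"
    using tel by (simp add: eq)
  ultimately have "(1 - C) * (1 - C / (A * B)) * suminf (tt A B C p) -
         (1 - C / A) * (1 - C / B) * suminf (tt A B (C * complex_of_real p) p) = 0"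
    by (rule sums_unique2)
  thus ?thesis by simp
qed



lemma iter:
  assumes p: "0 < p" "p < 1" and AB: "A \<noteq> 0" "B \<noteq> 0"
    and z: "norm (C / (A * B)) < 1"
    and nz: "\<And>k. 1 - C * complex_of_real p ^ k \<noteq> 0"
  shows "qp C p N * qp (C / (A * B)) p N * suminf (tt A B C p) =
         qp (C / A) p N * qp (C / B) p N * suminf (tt A B (C * complex_of_real p ^ N) p)"
proof (induction N)
  case 0
  then show ?case by simp
next
  case (Suc N)
  define C' where "C' = C * complex_of_real p ^ N"
  have z': "norm (C' / (A * B)) < 1"
  proof -
    have "norm (C' / (A * B)) = norm (C / (A * B)) * p ^ N"
      using p by (simp add: C'_def norm_mult norm_divide norm_power)
    also have "\<dots> \<le> norm (C / (A * B)) * 1"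
      using p by (intro mult_left_mono) (auto simp: power_le_one)
    finally show ?thesis using z by simp
  qed
  have nz': "1 - C' * complex_of_real p ^ k \<noteq> 0" for k
    using nz[of "N + k"] by (simp add: C'_def power_add mult_ac)
  have c: "(1 - C') * (1 - C' / (A * B)) * suminf (tt A B C' p) =
         (1 - C' / A) * (1 - C' / B) * suminf (tt A B (C' * complex_of_real p) p)"
    by (rule contig[OF p AB z' nz'])
  have e1: "C' * complex_of_real p = C * complex_of_real p ^ Suc N"
    by (simp add: C'_def mult_ac)
  have "qp C p (Suc N) * qp (C / (A * B)) p (Suc N) * suminf (tt A B C p) =
        (qp C p N * qp (C / (A * B)) p N * suminf (tt A B C p)) * ((1 - C') * (1 - C' / (A * B)))"
    by (simp add: qp_Suc C'_def mult_ac)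
  also have "\<dots> = qp (C / A) p N * qp (C / B) p N * ((1 - C') * (1 - C' / (A * B)) * suminf (tt A B C' p))"
    by (simp only: Suc.IH) (simp add: C'_def mult_ac)
  also have "\<dots> = qp (C / A) p N * qp (C / B) p N * ((1 - C' / A) * (1 - C' / B)) * suminf (tt A B (C * complex_of_real p ^ Suc N) p)"
    using c unfolding e1 by (simp only: mult.assoc)
  also have "\<dots> = qp (C / A) p (Suc N) * qp (C / B) p (Suc N) * suminf (tt A B (C * complex_of_real p ^ Suc N) p)"
    by (simp add: qp_Suc C'_def mult_ac)
  finally show ?case .
qed

lemma tail_lim:
  assumes p: "0 < p" "p < 1" and z: "norm (C / (A * B)) < 1"
  shows "(\<lambda>N. suminf (tt A B (C * complex_of_real p ^ N) p)) \<longlonglongrightarrow> 1"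
proof -
  define K where "K = exp (norm A / (1 - p)) * exp (norm B / (1 - p)) / (Lq p * exp (-1 / (1 - p)))"
  define z where "z = norm (C / (A * B))"
  have "(\<lambda>N. norm C * p ^ N) \<longlonglongrightarrow> norm C * 0"
    using p by (intro tendsto_intros LIMSEQ_power_zero) auto
  hence "eventually (\<lambda>N. norm C * p ^ N < 1/2) sequentially"
    by (intro order_tendstoD) auto
  then obtain N0 where N0: "\<And>N. N \<ge> N0 \<Longrightarrow> norm C * p ^ N < 1/2"
    by (auto simp: eventually_sequentially)
  have Lq: "Lq p > 0" "\<And>n. Lq p \<le> norm (qp (complex_of_real p) p n)" using Lq_props[OF p] by auto
  have bound: "norm (tt A B (C * complex_of_real p ^ N) p n) \<le> K * z ^ n * (p ^ n) ^ N"
    if "N \<ge> N0" for N n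
  proof -
    have w: "norm (C * complex_of_real p ^ N) \<le> 1/2"
      using N0[OF that] p by (simp add: norm_mult norm_power)
    have "norm (tt A B (C * complex_of_real p ^ N) p n) =
       norm (qp A p n) * norm (qp B p n) /
         (norm (qp (complex_of_real p) p n) * norm (qp (C * complex_of_real p ^ N) p n)) *
         (z * p ^ N) ^ n"
      using p by (simp add: tt_def norm_mult norm_divide norm_power z_def)
    also have "\<dots> \<le> exp (norm A / (1 - p)) * exp (norm B / (1 - p)) / (Lq p * exp (-1 / (1 - p))) *
         (z * p ^ N) ^ n"
    proof (intro mult_right_mono frac_le mult_mono mult_nonneg_nonneg)
      show "norm (qp A p n) \<le> exp (norm A / (1 - p))" by (rule qp_upper[OF p])
      show "norm (qp B p n) \<le> exp (norm B / (1 - p))" by (rule qp_upper[OF p])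
      show "exp (-1 / (1 - p)) \<le> norm (qp (C * complex_of_real p ^ N) p n)" by (rule qp_lower[OF p w])
    qed (use Lq p in \<open>auto simp: z_def\<close>)
    also have "\<dots> = K * z ^ n * (p ^ n) ^ N"
      by (simp add: K_def power_mult_distrib power_mult[symmetric] mult.commute[of N n])
    finally show ?thesis .
  qed
  define b where "b = (\<lambda>n::nat. if n = 0 then (1::complex) else 0)"
  have b1: "suminf b = 1" unfolding b_def using sums_single[of 0 "\<lambda>_. (1::complex)"] sums_unique by fastforce
  have "(\<lambda>N. suminf (\<lambda>n. tt A B (C * complex_of_real p ^ N) p n)) \<longlonglongrightarrow> suminf b"
  proof (rule tannerys_theorem[of _ b _ "\<lambda>n. K * z ^ n", THEN conjunct2, THEN conjunct2])
    fix n
    show "(\<lambda>N. tt A B (C * complex_of_real p ^ N) p n) \<longlonglongrightarrow> b n"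
    proof (cases "n = 0")
      case True thus ?thesis by (simp add: b_def)
    next
      case False
      have pn: "p ^ n < 1" "0 \<le> p ^ n"
        using p False power_less_one_iff[of p n] by auto
      have "(\<lambda>N. K * z ^ n * (p ^ n) ^ N) \<longlonglongrightarrow> K * z ^ n * 0"
        using pn by (intro tendsto_mult tendsto_const LIMSEQ_power_zero) auto
      hence lim0: "(\<lambda>N. K * z ^ n * (p ^ n) ^ N) \<longlonglongrightarrow> 0" by simp
      have ev: "eventually (\<lambda>N. norm (tt A B (C * complex_of_real p ^ N) p n) \<le> K * z ^ n * (p ^ n) ^ N) sequentially"
        unfolding eventually_sequentially using bound by blast
      have "(\<lambda>N. tt A B (C * complex_of_real p ^ N) p n) \<longlonglongrightarrow> 0"
        by (rule Lim_null_comparison[OF ev lim0])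
      thus ?thesis using False by (simp add: b_def)
    qed
  next
    show "eventually (\<lambda>(n, N). norm (tt A B (C * complex_of_real p ^ N) p n) \<le> K * z ^ n)
          (at_top \<times>\<^sub>F sequentially)"
      unfolding eventually_prod_filter
    proof (intro exI conjI allI impI)
      show "eventually (\<lambda>_. True) at_top" by simp
      show "eventually (\<lambda>N. N \<ge> N0) sequentially" by (simp add: eventually_ge_at_top)
      fix n N assume "N \<ge> N0"
      have "norm (tt A B (C * complex_of_real p ^ N) p n) \<le> K * z ^ n * (p ^ n) ^ N"
        by (rule bound[OF \<open>N \<ge> N0\<close>])
      also have "\<dots> \<le> K * z ^ n * 1"
        using p Lq by (intro mult_left_mono) (auto simp: K_def z_def power_le_one)
      finally show "(\<lambda>(n, N). norm (tt A B (C * complex_of_real p ^ N) p n) \<le> K * z ^ n) (n, N)"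
        by simp
    qed
  next
    show "summable (\<lambda>n. K * z ^ n)"
      using z by (intro summable_mult summable_geometric) (auto simp: z_def)
  qed simp
  thus ?thesis using b1 by simp
qed

lemma qgauss:
  assumes p: "0 < p" "p < 1" and AB: "A \<noteq> 0" "B \<noteq> 0"
    and z: "norm (C / (A * B)) < 1"
    and PC: "qpoch_inf C p \<noteq> 0" and Pz: "qpoch_inf (C / (A * B)) p \<noteq> 0"
  shows "tt A B C p sums (qpoch_inf (C / A) p * qpoch_inf (C / B) p /
                          (qpoch_inf C p * qpoch_inf (C / (A * B)) p))"
proof -
  have nz: "1 - C * complex_of_real p ^ k \<noteq> 0" for k
    using qpoch_nz_factor[OF p PC, of k] by simp
  have l1: "(\<lambda>N. qp C p N * qp (C / (A * B)) p N * suminf (tt A B C p)) \<longlonglongrightarrow>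
           qpoch_inf C p * qpoch_inf (C / (A * B)) p * suminf (tt A B C p)"
    by (intro tendsto_intros qp_lim[OF p])
  have l2: "(\<lambda>N. qp (C / A) p N * qp (C / B) p N * suminf (tt A B (C * complex_of_real p ^ N) p)) \<longlonglongrightarrow>
           qpoch_inf (C / A) p * qpoch_inf (C / B) p * 1"
    by (intro tendsto_intros qp_lim[OF p] tail_lim[OF p z])
  have "qpoch_inf C p * qpoch_inf (C / (A * B)) p * suminf (tt A B C p) =
        qpoch_inf (C / A) p * qpoch_inf (C / B) p * 1"
    using LIMSEQ_unique[OF l1 l2[folded iter[OF p AB z nz]]] .
  hence "suminf (tt A B C p) = qpoch_inf (C / A) p * qpoch_inf (C / B) p /
                          (qpoch_inf C p * qpoch_inf (C / (A * B)) p)"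
    using PC Pz by (simp add: field_simps)
  thus ?thesis using summable_sums[OF tt_summable[OF p z]] by simp
qed



lemma qpow_add: "qpow b (x + y) = qpow b x * qpow b y"
  by (simp add: qpow_def distrib_right exp_add)

lemma qpow_diff: "qpow b (x - y) = qpow b x / qpow b y"
  by (simp add: qpow_def left_diff_distrib exp_diff)

lemma qpow_nz [simp]: "qpow b x \<noteq> 0"
  by (simp add: qpow_def)

lemma qpow_mult_nat: "qpow b (x * of_nat n) = qpow b x ^ n"
  unfolding qpow_def by (subst exp_of_nat_mult[symmetric]) (simp add: mult_ac)

lemma qpow_of_nat: "0 < b \<Longrightarrow> qpow b (of_nat n) = complex_of_real b ^ n"
  using qpow_mult_nat[of b 1 n] by (simp add: qpow_def exp_of_real)

lemma qpow_one: "0 < b \<Longrightarrow> qpow b 1 = complex_of_real b"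
  by (simp add: qpow_def exp_of_real)

lemma qpow_sq: "0 < q \<Longrightarrow> qpow (q^2) x = qpow q (2 * x)"
  by (simp add: qpow_def ln_realpow mult_ac)

lemma qpow_real: "0 < q \<Longrightarrow> qpow q (complex_of_real r) = complex_of_real (q powr r)"
  by (simp add: qpow_def powr_def exp_of_real[symmetric] mult_ac)

lemma norm_qpow_lt1:
  assumes "0 < p" "p < 1" "Re x > 0"
  shows "norm (qpow p x) < 1"
proof -
  have "ln p < 0" using assms by simp
  hence "Re x * ln p < 0" using assms by (simp add: mult_pos_neg)
  thus ?thesis by (simp add: qpow_def)
qed

lemma qpoch_real_nz:
  assumes "0 < p" "p < 1" "0 < x" "x < 1"
  shows "qpoch_inf (complex_of_real x) p \<noteq> 0"
  unfolding qpoch_inf_def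
proof (rule prodinf_nonzero[OF qp_conv[OF assms(1,2)]])
  fix k
  have "x * p ^ k \<le> x * 1" using assms by (intro mult_left_mono) (auto simp: power_le_one)
  hence "x * p ^ k < 1" using assms by (metis le_less_trans mult.right_neutral)
  hence ne: "1 - x * p ^ k \<noteq> 0" by simp
  have "1 - complex_of_real x * complex_of_real (p ^ k) = complex_of_real (1 - x * p ^ k)" by simp
  thus "1 - complex_of_real x * complex_of_real (p ^ k) \<noteq> 0" using ne by (metis of_real_eq_0_iff)
qed

lemma qgamma_nz:
  assumes "0 < p" "p < 1" "qpoch_inf (qpow p x) p \<noteq> 0"
  shows "qgamma p x \<noteq> 0"
  using assms qpoch_real_nz[OF assms(1,2) assms(1,2)] by (simp add: qgamma_def)

lemma qgamma_mul_P:
  assumes "qpoch_inf (qpow p x) p \<noteq> 0"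
  shows "qgamma p x * qpoch_inf (qpow p x) p = qpoch_inf (complex_of_real p) p * qpow (1 - p) (1 - x)"
  using assms by (simp add: qgamma_def)

lemma refl_formula:
  assumes q: "0 < q" "q < 1"
    and P1: "qpoch_inf (qpow (q^2) \<alpha>) (q^2) \<noteq> 0" and P2: "qpoch_inf (qpow (q^2) (1 - \<alpha>)) (q^2) \<noteq> 0"
  shows "qpow q (- \<alpha> * (\<alpha> - 1)) * qsin q \<alpha> / qpi q = 1 / (qgamma (q^2) \<alpha> * qgamma (q^2) (1 - \<alpha>))"
proof -
  define p where "p = q^2"
  have p: "0 < p" "p < 1" using q by (auto simp: p_def power_less_one_iff)
  have Pq: "qpoch_inf (complex_of_real q) p \<noteq> 0" by (rule qpoch_real_nz[OF p q])
  have Pp: "qpoch_inf (complex_of_real p) p \<noteq> 0" by (rule qpoch_real_nz[OF p p])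
  have e1: "qpow q (2 - 2 * \<alpha>) = qpow p (1 - \<alpha>)" using q by (simp add: p_def qpow_sq algebra_simps)
  have e2: "qpow q (2 * \<alpha>) = qpow p \<alpha>" using q by (simp add: p_def qpow_sq)
  have e3: "qpow q (- \<alpha> * (\<alpha> - 1)) * qpow q ((\<alpha> - 1/2)^2) = complex_of_real (q powr (1/4))"
  proof -
    have "qpow q (- \<alpha> * (\<alpha> - 1)) * qpow q ((\<alpha> - 1/2)^2) = qpow q (complex_of_real (1/4))"
      by (subst qpow_add[symmetric]) (simp add: power2_eq_square algebra_simps)
    thus ?thesis using q qpow_real[of q "1/4"] by simp
  qed
  have e4: "qpow (1 - p) (1 - \<alpha>) * qpow (1 - p) (1 - (1 - \<alpha>)) = complex_of_real (1 - p)"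
    using p by (simp add: qpow_add[symmetric] qpow_one)
  have qpos: "complex_of_real (q powr (1/4)) \<noteq> 0" using q by simp
  have p1: "complex_of_real (1 - p) \<noteq> 0" using p by simp
  have "qpow q (- \<alpha> * (\<alpha> - 1)) * qsin q \<alpha> / qpi q =
        (qpow q (- \<alpha> * (\<alpha> - 1)) * qpow q ((\<alpha> - 1/2)^2)) * qpoch_inf (qpow p (1 - \<alpha>)) p *
          qpoch_inf (qpow p \<alpha>) p / qpoch_inf (complex_of_real q) p ^ 2 /
        (complex_of_real (1 - p) * complex_of_real (q powr (1/4)) *
          qpoch_inf (complex_of_real p) p ^ 2 / qpoch_inf (complex_of_real q) p ^ 2)"
    unfolding qsin_def qpi_def e1 e2 p_def by (simp add: mult_ac)
  also have "\<dots> = qpoch_inf (qpow p (1 - \<alpha>)) p * qpoch_inf (qpow p \<alpha>) p /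
        (complex_of_real (1 - p) * qpoch_inf (complex_of_real p) p ^ 2)"
  proof -
    have qq: "q powr (1/4) \<noteq> 0" using q by simp
    show ?thesis unfolding e3 using Pq Pp qq p1 by (simp add: field_simps)
  qed
  also have "\<dots> = 1 / (qgamma p \<alpha> * qgamma p (1 - \<alpha>))"
    unfolding qgamma_def e4[symmetric] using P1 P2 Pp p1 by (simp add: p_def field_simps power2_eq_square)
  finally show ?thesis by (simp add: p_def)
qed



lemma qfact_eq:
  assumes "0 < p" "p < 1"
  shows "complex_of_real (qfact p n) = qp (complex_of_real p) p n / complex_of_real (1 - p) ^ n"
proof (induction n)
  case 0 then show ?case by (simp add: qfact_def)
next
  case (Suc n)
  have r: "complex_of_real (1 - p) \<noteq> 0" using assms by simp
  have "qfact p (Suc n) = qfact p n * ((1 - p ^ Suc n) / (1 - p))"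
    by (simp add: qfact_def qint_def prod.cl_ivl_Suc)
  hence "complex_of_real (qfact p (Suc n)) = complex_of_real (qfact p n) * ((1 - complex_of_real p ^ Suc n) / complex_of_real (1 - p))"
    by simp
  also have "\<dots> = qp (complex_of_real p) p (Suc n) / complex_of_real (1 - p) ^ Suc n"
    unfolding Suc.IH qp_Suc using r by (simp add: field_simps)
  finally show ?case .
qed

lemma qgamma_shift:
  assumes p: "0 < p" "p < 1" and P: "qpoch_inf (qpow p x) p \<noteq> 0"
  shows "qgamma p (x + of_nat n) = qgamma p x * qp (qpow p x) p n / complex_of_real (1 - p) ^ n"
proof -
  have sp: "qpoch_inf (qpow p x) p = qp (qpow p x) p n * qpoch_inf (qpow p (x + of_nat n)) p"
    using qpoch_split[OF p P, of n] p by (simp add: qpow_add qpow_of_nat)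
  have qn: "qp (qpow p x) p n \<noteq> 0" by (rule qp_nz[OF p P])
  have e: "qpow (1 - p) (1 - (x + of_nat n)) = qpow (1 - p) (1 - x) / complex_of_real (1 - p) ^ n"
  proof -
    have "qpow (1 - p) (1 - (x + of_nat n)) = qpow (1 - p) ((1 - x) - of_nat n)"
      by (simp add: algebra_simps)
    thus ?thesis using p by (simp add: qpow_diff qpow_of_nat)
  qed
  have P': "qpoch_inf (qpow p (x + of_nat n)) p \<noteq> 0" using sp P by auto
  have r: "complex_of_real (1 - p) \<noteq> 0" using p by simp
  show ?thesis
    unfolding qgamma_def e using sp P P' qn r by (simp add: field_simps)
qed



lemma main:
  fixes q p :: real and \<alpha> a b c :: complex
  assumes pq: "p = q^2" and q: "0 < q" "q < 1"
    and re: "Re (c - a - b) > 0"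
    and poles_n: "\<And>n::nat. \<alpha> + a + of_nat n \<notin> qgamma_poles p"
                 "\<And>n::nat. 1 - \<alpha> + b + of_nat n \<notin> qgamma_poles p"
                 "\<And>n::nat. c + of_nat n + 1 \<notin> qgamma_poles p"
    and poles: "\<alpha> \<notin> qgamma_poles p" "1 - \<alpha> \<notin> qgamma_poles p"
               "\<alpha> + a \<notin> qgamma_poles p" "1 - \<alpha> + b \<notin> qgamma_poles p"
               "c - a - b \<notin> qgamma_poles p"
               "1 - \<alpha> + (c - a) \<notin> qgamma_poles p"
               "\<alpha> + (c - b) \<notin> qgamma_poles p"
  shows "(\<lambda>n. qshift p \<alpha> (a + of_nat n) * qshift p (1 - \<alpha>) (b + of_nat n)
              / (complex_of_real (qfact p n) * qgamma p (c + of_nat n + 1))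
              * qpow q (2 * (c - a - b) * of_nat n))
         sums (qshift p \<alpha> a * qshift p (1 - \<alpha>) b * qgamma p (c - a - b)
               / (qshift p (1 - \<alpha>) (c - a) * qshift p \<alpha> (c - b))
               * qpow q (- \<alpha> * (\<alpha> - 1)) * qsin q \<alpha> / qpi q)"
proof -
  have p: "0 < p" "p < 1" using q by (auto simp: pq power_less_one_iff)
  define P where "P = (\<lambda>x. qpoch_inf (qpow p x) p)"
  define G where "G = qgamma p"
  have PA: "P (\<alpha> + a) \<noteq> 0" and PB: "P (1 - \<alpha> + b) \<noteq> 0" and Pal: "P \<alpha> \<noteq> 0"
    and P1al: "P (1 - \<alpha>) \<noteq> 0" and Pz: "P (c - a - b) \<noteq> 0" and Pca: "P (1 - \<alpha> + (c - a)) \<noteq> 0"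
    and Pcb: "P (\<alpha> + (c - b)) \<noteq> 0"
    using poles by (auto simp: P_def qgamma_poles_def)
  have PC: "P (c + 1) \<noteq> 0" using poles_n(3)[of 0] by (simp add: P_def qgamma_poles_def)
  define A where "A = qpow p (\<alpha> + a)"
  define B where "B = qpow p (1 - \<alpha> + b)"
  define C where "C = qpow p (c + 1)"
  have AB: "A \<noteq> 0" "B \<noteq> 0" by (auto simp: A_def B_def)
  have zC: "C / (A * B) = qpow p (c - a - b)"
  proof -
    have "qpow p (c - a - b) = qpow p ((c + 1) - ((\<alpha> + a) + (1 - \<alpha> + b)))"
      by (rule arg_cong[where f = "qpow p"]) (simp add: algebra_simps)
    thus ?thesis by (simp add: qpow_diff qpow_add A_def B_def C_def)
  qed
  have CA: "C / A = qpow p (1 - \<alpha> + (c - a))"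
  proof -
    have "qpow p (1 - \<alpha> + (c - a)) = qpow p ((c + 1) - (\<alpha> + a))"
      by (rule arg_cong[where f = "qpow p"]) (simp add: algebra_simps)
    thus ?thesis by (simp add: qpow_diff A_def C_def)
  qed
  have CB: "C / B = qpow p (\<alpha> + (c - b))"
  proof -
    have "qpow p (\<alpha> + (c - b)) = qpow p ((c + 1) - (1 - \<alpha> + b))"
      by (rule arg_cong[where f = "qpow p"]) (simp add: algebra_simps)
    thus ?thesis unfolding B_def C_def qpow_diff[symmetric] by (rule sym)
  qed
  have znorm: "norm (C / (A * B)) < 1" unfolding zC by (rule norm_qpow_lt1[OF p re])
  define S where "S = qpoch_inf (C / A) p * qpoch_inf (C / B) p / (qpoch_inf C p * qpoch_inf (C / (A * B)) p)"
  have gauss: "tt A B C p sums S"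
  proof -
    have PC': "qpoch_inf C p \<noteq> 0" using PC by (simp add: P_def C_def)
    have Pz': "qpoch_inf (C / (A * B)) p \<noteq> 0" unfolding zC using Pz by (simp add: P_def)
    show ?thesis unfolding S_def by (rule qgauss[OF p AB znorm PC' Pz'])
  qed
  define K where "K = G (\<alpha> + a) * G (1 - \<alpha> + b) / (G \<alpha> * G (1 - \<alpha>) * G (c + 1))"
  have Pp: "qpoch_inf (complex_of_real p) p \<noteq> 0" by (rule qpoch_real_nz[OF p p])
  have r: "complex_of_real (1 - p) \<noteq> 0" using p by simp
  have Gnz: "G \<alpha> \<noteq> 0" "G (1 - \<alpha>) \<noteq> 0" "G (c + 1) \<noteq> 0" "G (\<alpha> + a) \<noteq> 0" "G (1 - \<alpha> + b) \<noteq> 0"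
    "G (c - a - b) \<noteq> 0" "G (1 - \<alpha> + (c - a)) \<noteq> 0" "G (\<alpha> + (c - b)) \<noteq> 0"
    using Pal P1al PC PA PB Pz Pca Pcb by (auto simp: G_def P_def intro!: qgamma_nz[OF p])
  have termeq: "qshift p \<alpha> (a + of_nat n) * qshift p (1 - \<alpha>) (b + of_nat n)
              / (complex_of_real (qfact p n) * qgamma p (c + of_nat n + 1))
              * qpow q (2 * (c - a - b) * of_nat n) = K * tt A B C p n" for n
  proof -
    have h1: "qgamma p (\<alpha> + (a + of_nat n)) = G (\<alpha> + a) * qp A p n / complex_of_real (1 - p) ^ n"
      using qgamma_shift[OF p, of "\<alpha> + a" n] PA by (simp add: add.assoc G_def A_def P_def)
    have h2: "qgamma p (1 - \<alpha> + (b + of_nat n)) = G (1 - \<alpha> + b) * qp B p n / complex_of_real (1 - p) ^ n"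
      using qgamma_shift[OF p, of "1 - \<alpha> + b" n] PB by (simp add: add.assoc G_def B_def P_def)
    have h3: "qgamma p (c + of_nat n + 1) = G (c + 1) * qp C p n / complex_of_real (1 - p) ^ n"
    proof -
      have e: "c + of_nat n + 1 = (c + 1) + of_nat n" by simp
      show ?thesis unfolding e using qgamma_shift[OF p, of "c + 1" n] PC by (simp add: G_def C_def P_def)
    qed
    have h4: "complex_of_real (qfact p n) = qp (complex_of_real p) p n / complex_of_real (1 - p) ^ n"
      by (rule qfact_eq[OF p])
    have h5: "qpow q (2 * (c - a - b) * of_nat n) = (C / (A * B)) ^ n"
      unfolding zC using q by (simp add: qpow_mult_nat qpow_sq pq)
    have n1: "qp (complex_of_real p) p n \<noteq> 0" by (rule qp_nz[OF p Pp])
    have n2: "qp C p n \<noteq> 0" using qp_nz[OF p] PC by (simp add: P_def C_def)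
    show ?thesis
      unfolding qshift_def h1 h2 h3 h4 h5 K_def tt_def
      using Gnz n1 n2 r by (simp add: G_def field_simps)
  qed
  have sums1: "(\<lambda>n. K * tt A B C p n) sums (K * S)" by (rule sums_mult[OF gauss])
  have refl: "qpow q (- \<alpha> * (\<alpha> - 1)) * qsin q \<alpha> / qpi q = 1 / (G \<alpha> * G (1 - \<alpha>))"
    using refl_formula[OF q] Pal P1al by (simp add: G_def P_def pq)
  have key: "G (c - a - b) * G (c + 1) * P (c + 1) * P (c - a - b) =
             G (1 - \<alpha> + (c - a)) * G (\<alpha> + (c - b)) * P (1 - \<alpha> + (c - a)) * P (\<alpha> + (c - b))"
  proof -
    have m: "G x * P x = qpoch_inf (complex_of_real p) p * qpow (1 - p) (1 - x)" if "P x \<noteq> 0" for x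
      using qgamma_mul_P[of p x] that by (simp add: G_def P_def)
    have ex: "qpow (1 - p) (1 - (c - a - b)) * qpow (1 - p) (1 - (c + 1)) =
              qpow (1 - p) (1 - (1 - \<alpha> + (c - a))) * qpow (1 - p) (1 - (\<alpha> + (c - b)))"
    proof -
      have "qpow (1 - p) ((1 - (c - a - b)) + (1 - (c + 1))) =
            qpow (1 - p) ((1 - (1 - \<alpha> + (c - a))) + (1 - (\<alpha> + (c - b))))"
        by (rule arg_cong[where f = "qpow (1 - p)"]) (simp add: algebra_simps)
      thus ?thesis by (simp only: qpow_add)
    qed
    have "G (c - a - b) * G (c + 1) * P (c + 1) * P (c - a - b) =
          (G (c - a - b) * P (c - a - b)) * (G (c + 1) * P (c + 1))" by (simp add: mult_ac)
    also have "\<dots> = qpoch_inf (complex_of_real p) p ^ 2 * (qpow (1 - p) (1 - (c - a - b)) * qpow (1 - p) (1 - (c + 1)))"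
      using m[OF Pz] m[OF PC] by (simp add: power2_eq_square mult_ac)
    also have "\<dots> = (G (1 - \<alpha> + (c - a)) * P (1 - \<alpha> + (c - a))) * (G (\<alpha> + (c - b)) * P (\<alpha> + (c - b)))"
      unfolding ex using m[OF Pca] m[OF Pcb] by (simp add: power2_eq_square mult_ac)
    finally show ?thesis by (simp add: mult_ac)
  qed
  have final: "K * S = qshift p \<alpha> a * qshift p (1 - \<alpha>) b * qgamma p (c - a - b)
               / (qshift p (1 - \<alpha>) (c - a) * qshift p \<alpha> (c - b))
               * qpow q (- \<alpha> * (\<alpha> - 1)) * qsin q \<alpha> / qpi q"
  proof -
    have S': "S = P (1 - \<alpha> + (c - a)) * P (\<alpha> + (c - b)) / (P (c + 1) * P (c - a - b))"
      unfolding S_def CA CB zC by (simp add: P_def C_def)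
    have Gz: "G (c - a - b) = G (1 - \<alpha> + (c - a)) * G (\<alpha> + (c - b)) * P (1 - \<alpha> + (c - a)) * P (\<alpha> + (c - b))
                / (G (c + 1) * P (c + 1) * P (c - a - b))"
      using key Gnz PC Pz by (simp add: field_simps)
    have "qshift p \<alpha> a * qshift p (1 - \<alpha>) b * qgamma p (c - a - b)
               / (qshift p (1 - \<alpha>) (c - a) * qshift p \<alpha> (c - b))
               * qpow q (- \<alpha> * (\<alpha> - 1)) * qsin q \<alpha> / qpi q =
          qshift p \<alpha> a * qshift p (1 - \<alpha>) b * qgamma p (c - a - b)
               / (qshift p (1 - \<alpha>) (c - a) * qshift p \<alpha> (c - b))
               * (qpow q (- \<alpha> * (\<alpha> - 1)) * qsin q \<alpha> / qpi q)"
      by (simp add: mult.assoc)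
    also have "\<dots> = K * S"
      unfolding refl qshift_def G_def[symmetric] Gz S' K_def
      using Gnz Pz PC Pca Pcb by (simp add: field_simps)
    finally show ?thesis by simp
  qed
  show ?thesis using sums1 unfolding final[symmetric] using termeq by simp
qed

theorem theorem1p1:
  fixes q :: real and \<alpha> a b c :: complex
  assumes q: "0 < q" "q < 1"
    and re: "Re (c - a - b) > 0"
    and poles_n: "\<And>n::nat. \<alpha> + a + of_nat n \<notin> qgamma_poles (q^2)"
                 "\<And>n::nat. 1 - \<alpha> + b + of_nat n \<notin> qgamma_poles (q^2)"
                 "\<And>n::nat. c + of_nat n + 1 \<notin> qgamma_poles (q^2)"
    and poles: "\<alpha> \<notin> qgamma_poles (q^2)" "1 - \<alpha> \<notin> qgamma_poles (q^2)"
               "\<alpha> + a \<notin> qgamma_poles (q^2)" "1 - \<alpha> + b \<notin> qgamma_poles (q^2)"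
               "c - a - b \<notin> qgamma_poles (q^2)"
               "1 - \<alpha> + (c - a) \<notin> qgamma_poles (q^2)"
               "\<alpha> + (c - b) \<notin> qgamma_poles (q^2)"
  shows "(\<lambda>n. qshift (q^2) \<alpha> (a + of_nat n) * qshift (q^2) (1 - \<alpha>) (b + of_nat n)
              / (complex_of_real (qfact (q^2) n) * qgamma (q^2) (c + of_nat n + 1))
              * qpow q (2 * (c - a - b) * of_nat n))
         sums (qshift (q^2) \<alpha> a * qshift (q^2) (1 - \<alpha>) b * qgamma (q^2) (c - a - b)
               / (qshift (q^2) (1 - \<alpha>) (c - a) * qshift (q^2) \<alpha> (c - b))
               * qpow q (- \<alpha> * (\<alpha> - 1)) * qsin q \<alpha> / qpi q)"
    by (rule main[OF refl q re poles_n poles])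

end
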